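(* Let $d\geq 2$ and $n_1,\dots,n_d\geq 1$ be integers and let $G_1,G_2$ be graphs. Then $K_{n_1,\dots,n_d}$ is isomorphic to a subgraph of $G_1\boxtimes G_2$ if and only if there exist non-negative integers $a_1,\dots,a_d,b_1,\dots,b_d,z_1,\dots,z_d,x,y$ such that: (i) $K_{a_1,\dots,a_d,\overline{x}}$ is isomorphic to a subgraph of $G_1$; (ii) $K_{b_1,\dots,b_d,\overline{y}}$ is isomorphic to a subgraph of $G_2$; (iii) $n_j \leq a_jb_j+a_jy+b_jx+z_j$ for all $j\in\{1,\dots,d\}$; and (iv) $z_1+\dots+z_d\leq xy$.
   Context: The strong product $G_1 \boxtimes G_2$ has vertex set $V(G_1)\times V(G_2)$, with distinct vertices $(a,v),(b,u)$ adjacent iff ($a=b$ or $ab\in E(G_1)$) and ($u=v$ or $uv\in E(G_2)$). For non-negative integers $a_1,\dots,a_d,x$, the graph $K_{a_1,\dots,a_d,\overline{x}}$ has vertex set $A_1\cup\dots\cup A_d\cup X$, a disjoint union with $|A_j|=a_j$ and $|X|=x$, in which two distinct vertices are adjacent iff they lie in different sets among $A_1,\dots,A_d,X$ or both lie in $X$ (so $X$ is a clique, each $A_j$ is independent, and parts may be empty). $K_{n_1,\dots,n_d}$ denotes the complete $d$-partite graph with parts of sizes $n_1,\dots,n_d$. *)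

theory Defs
  imports Main
begin

type_synonym 'a graph = "'a set \<times> ('a \<Rightarrow> 'a \<Rightarrow> bool)"

definition verts :: "'a graph \<Rightarrow> 'a set" where "verts G = fst G"
definition adj :: "'a graph \<Rightarrow> 'a \<Rightarrow> 'a \<Rightarrow> bool" where "adj G = snd G"

definition graph :: "'a graph \<Rightarrow> bool" where
  "graph G \<longleftrightarrow>
     (\<forall>u v. adj G u v \<longrightarrow> u \<in> verts G \<and> v \<in> verts G) \<and>
     (\<forall>u v. adj G u v \<longrightarrow> adj G v u) \<and>
     (\<forall>v. \<not> adj G v v)"

definition subgraph_iso :: "'a graph \<Rightarrow> 'b graph \<Rightarrow> bool" where
  "subgraph_iso H G \<longleftrightarrow>
     (\<exists>f. inj_on f (verts H) \<and> f ` verts H \<subseteq> verts G \<and>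
          (\<forall>u\<in>verts H. \<forall>v\<in>verts H. adj H u v \<longrightarrow> adj G (f u) (f v)))"

definition strong_product :: "'a graph \<Rightarrow> 'b graph \<Rightarrow> ('a \<times> 'b) graph" where
  "strong_product G1 G2 =
     (verts G1 \<times> verts G2,
      \<lambda>(a, v) (b, u). (a, v) \<noteq> (b, u) \<and>
         (a = b \<or> adj G1 a b) \<and> (u = v \<or> adj G2 v u))"

text \<open>K_{a_1,...,a_d, overline x}: parts A_j = {(j,i). i < a j} for j < d
(indices 0..d-1) and the clique X = {(d,i). i < x}.\<close>
definition K_clique :: "nat \<Rightarrow> (nat \<Rightarrow> nat) \<Rightarrow> nat \<Rightarrow> (nat \<times> nat) graph" where
  "K_clique d a x =
     ({(j, i). j < d \<and> i < a j} \<union> {(j, i). j = d \<and> i < x},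
      \<lambda>(j, i) (k, l). (j, i) \<in> {(j, i). j < d \<and> i < a j} \<union> {(j, i). j = d \<and> i < x} \<and>
                      (k, l) \<in> {(j, i). j < d \<and> i < a j} \<union> {(j, i). j = d \<and> i < x} \<and>
                      (j, i) \<noteq> (k, l) \<and> (j \<noteq> k \<or> j = d))"

definition K_multipartite :: "nat \<Rightarrow> (nat \<Rightarrow> nat) \<Rightarrow> (nat \<times> nat) graph" where
  "K_multipartite d n =
     ({(j, i). j < d \<and> i < n j},
      \<lambda>(j, i) (k, l). (j, i) \<in> {(j, i). j < d \<and> i < n j} \<and>
                      (k, l) \<in> {(j, i). j < d \<and> i < n j} \<and> j \<noteq> k)"

end

theory Submission
  imports Defs
begin

lemma verts_K_clique: "verts (K_clique d a x) = {(j, i). j < d \<and> i < a j} \<union> {(j, i). j = d \<and> i < x}"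
  by (simp add: verts_def K_clique_def)

lemma adj_K_clique: "adj (K_clique d a x) (j,i) (k,l) \<longleftrightarrow>
   (j,i) \<in> verts (K_clique d a x) \<and> (k,l) \<in> verts (K_clique d a x) \<and> (j, i) \<noteq> (k, l) \<and> (j \<noteq> k \<or> j = d)"
  by (simp add: verts_def adj_def K_clique_def)

lemma verts_K_mp: "verts (K_multipartite d n) = {(j, i). j < d \<and> i < n j}"
  by (simp add: verts_def K_multipartite_def)

lemma adj_K_mp: "adj (K_multipartite d n) (j,i) (k,l) \<longleftrightarrow>
   (j,i) \<in> verts (K_multipartite d n) \<and> (k,l) \<in> verts (K_multipartite d n) \<and> j \<noteq> k"
  by (simp add: verts_def adj_def K_multipartite_def)

lemma verts_sp: "verts (strong_product G1 G2) = verts G1 \<times> verts G2"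
  by (simp add: verts_def strong_product_def)

lemma adj_sp: "adj (strong_product G1 G2) (a,v) (b,u) \<longleftrightarrow>
   (a, v) \<noteq> (b, u) \<and> (a = b \<or> adj G1 a b) \<and> (u = v \<or> adj G2 v u)"
  by (simp add: adj_def strong_product_def)

lemma clique_embed:
  fixes G :: "'a graph" and A :: "nat \<Rightarrow> 'a set"
  assumes fin: "\<And>j. j < d \<Longrightarrow> finite (A j)" "finite X"
    and sub: "\<And>j. j < d \<Longrightarrow> A j \<subseteq> verts G" "X \<subseteq> verts G"
    and disj: "\<And>j k. j < d \<Longrightarrow> k < d \<Longrightarrow> j \<noteq> k \<Longrightarrow> A j \<inter> A k = {}"
      "\<And>j. j < d \<Longrightarrow> A j \<inter> X = {}"
    and adjAA: "\<And>j k p q. j < d \<Longrightarrow> k < d \<Longrightarrow> j \<noteq> k \<Longrightarrow> p \<in> A j \<Longrightarrow> q \<in> A k \<Longrightarrow> adj G p q"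
    and adjAX: "\<And>j p q. j < d \<Longrightarrow> p \<in> A j \<Longrightarrow> q \<in> X \<Longrightarrow> adj G p q \<and> adj G q p"
    and adjXX: "\<And>p q. p \<in> X \<Longrightarrow> q \<in> X \<Longrightarrow> p \<noteq> q \<Longrightarrow> adj G p q"
  shows "subgraph_iso (K_clique d (\<lambda>j. card (A j)) (card X)) G"
proof -
  define hA where "hA j = (SOME h. bij_betw h {0..<card (A j)} (A j))" for j
  have hA: "bij_betw (hA j) {0..<card (A j)} (A j)" if "j < d" for j
    unfolding hA_def using someI_ex[OF ex_bij_betw_nat_finite[OF fin(1)[OF that]]] .
  obtain hX where hX: "bij_betw hX {0..<card X} X" using ex_bij_betw_nat_finite[OF fin(2)] by blast
  define h where "h = (\<lambda>(j,i). if j < d then hA j i else hX i)"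
  have hA_in: "hA j i \<in> A j" if "j < d" "i < card (A j)" for j i
    using hA[OF that(1)] that(2) by (auto simp: bij_betw_def)
  have hX_in: "hX i \<in> X" if "i < card X" for i
    using hX that by (auto simp: bij_betw_def)
  show ?thesis
    unfolding subgraph_iso_def
  proof (intro exI[of _ h] conjI)
    show "inj_on h (verts (K_clique d (\<lambda>j. card (A j)) (card X)))"
    proof (rule inj_onI, clarsimp simp: verts_K_clique)
      fix j i k l
      assume a: "h (j, i) = h (k, l)" "j < d \<and> i < card (A j) \<or> j = d \<and> i < card X"
        "k < d \<and> l < card (A k) \<or> k = d \<and> l < card X"
      show "j = k \<and> i = l"
        using a
      proof (elim disjE conjE)
        assume "j < d" "i < card (A j)" "k < d" "l < card (A k)"
        then show ?thesis using a(1) hA_in[of j i] hA_in[of k l] disj(1)[of j k]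
            bij_betw_imp_inj_on[OF hA[of j]]
          by (cases "j = k") (auto simp: h_def inj_on_def)
      next
        assume "j < d" "i < card (A j)" "k = d" "l < card X"
        then show ?thesis using a(1) hA_in[of j i] hX_in[of l] disj(2)[of j] by (auto simp: h_def)
      next
        assume "j = d" "i < card X" "k < d" "l < card (A k)"
        then show ?thesis using a(1) hA_in[of k l] hX_in[of i] disj(2)[of k] by (auto simp: h_def)
      next
        assume "j = d" "i < card X" "k = d" "l < card X"
        then show ?thesis using a(1) bij_betw_imp_inj_on[OF hX] by (auto simp: h_def inj_on_def)
      qed
    qed
    show "h ` verts (K_clique d (\<lambda>j. card (A j)) (card X)) \<subseteq> verts G"
      using hA_in hX_in sub by (fastforce simp: verts_K_clique h_def)
    show "\<forall>u\<in>verts (K_clique d (\<lambda>j. card (A j)) (card X)).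
       \<forall>v\<in>verts (K_clique d (\<lambda>j. card (A j)) (card X)).
          adj (K_clique d (\<lambda>j. card (A j)) (card X)) u v \<longrightarrow> adj G (h u) (h v)"
    proof (intro ballI impI)
      fix u v
      assume u0: "u \<in> verts (K_clique d (\<lambda>j. card (A j)) (card X))"
        and v0: "v \<in> verts (K_clique d (\<lambda>j. card (A j)) (card X))"
        and a0: "adj (K_clique d (\<lambda>j. card (A j)) (card X)) u v"
      obtain j i k l where uv: "u = (j,i)" "v = (k,l)" by fastforce
      have u: "(j, i) \<in> verts (K_clique d (\<lambda>j. card (A j)) (card X))"
        and v: "(k, l) \<in> verts (K_clique d (\<lambda>j. card (A j)) (card X))"
        and ne: "(j, i) \<noteq> (k, l)" and c: "j \<noteq> k \<or> j = d"
        using u0 v0 a0 unfolding uv adj_K_clique by auto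
      from u v have u': "j < d \<and> i < card (A j) \<or> j = d \<and> i < card X"
        and v': "k < d \<and> l < card (A k) \<or> k = d \<and> l < card X" by (auto simp: verts_K_clique)
      have "adj G (h (j, i)) (h (k, l))"
        using u' v'
      proof (elim disjE conjE)
        assume "j < d" "i < card (A j)" "k < d" "l < card (A k)"
        then show ?thesis using c hA_in[of j i] hA_in[of k l] adjAA[of j k] by (auto simp: h_def)
      next
        assume "j < d" "i < card (A j)" "k = d" "l < card X"
        then show ?thesis using hA_in[of j i] hX_in[of l] adjAX[of j] by (auto simp: h_def)
      next
        assume "j = d" "i < card X" "k < d" "l < card (A k)"
        then show ?thesis using hA_in[of k l] hX_in[of i] adjAX[of k] by (auto simp: h_def)
      next
        assume "j = d" "i < card X" "k = d" "l < card X"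
        then show ?thesis using ne hX_in[of i] hX_in[of l] adjXX bij_betw_imp_inj_on[OF hX]
          by (auto simp: h_def inj_on_def) (metis atLeastLessThan_iff zero_le)
      qed
      then show "adj G (h u) (h v)" by (simp add: uv)
    qed
  qed
qed


lemma adj_sp': "adj (strong_product G1 G2) p q \<longleftrightarrow>
   p \<noteq> q \<and> (fst p = fst q \<or> adj G1 (fst p) (fst q)) \<and> (snd q = snd p \<or> adj G2 (snd p) (snd q))"
  by (cases p, cases q) (simp add: adj_sp)

lemma forward:
  fixes G1 :: "'a graph" and G2 :: "'b graph"
  assumes "subgraph_iso (K_multipartite d n) (strong_product G1 G2)"
  shows "\<exists>(a :: nat \<Rightarrow> nat) (b :: nat \<Rightarrow> nat) (z :: nat \<Rightarrow> nat) (x :: nat) (y :: nat).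
       subgraph_iso (K_clique d a x) G1 \<and>
       subgraph_iso (K_clique d b y) G2 \<and>
       (\<forall>j<d. n j \<le> a j * b j + a j * y + b j * x + z j) \<and>
       (\<Sum>j<d. z j) \<le> x * y"
proof -
  obtain f where inj: "inj_on f (verts (K_multipartite d n))"
    and img: "f ` verts (K_multipartite d n) \<subseteq> verts (strong_product G1 G2)"
    and ad: "\<forall>u\<in>verts (K_multipartite d n). \<forall>v\<in>verts (K_multipartite d n).
        adj (K_multipartite d n) u v \<longrightarrow> adj (strong_product G1 G2) (f u) (f v)"
    using assms unfolding subgraph_iso_def by blast
  have f_in: "f (j,i) \<in> verts G1 \<times> verts G2" if "j < d" "i < n j" for j i
    using img that by (auto simp: verts_K_mp verts_sp)
  have f_adj: "f (j,i) \<noteq> f (k,l) \<and> (fst (f (j,i)) = fst (f (k,l)) \<or> adj G1 (fst (f (j,i))) (fst (f (k,l))))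
      \<and> (snd (f (k,l)) = snd (f (j,i)) \<or> adj G2 (snd (f (j,i))) (snd (f (k,l))))"
    if "j < d" "k < d" "j \<noteq> k" "i < n j" "l < n k" for j k i l
  proof -
    have "adj (K_multipartite d n) (j,i) (k,l)" using that by (simp add: adj_K_mp verts_K_mp)
    then have "adj (strong_product G1 G2) (f (j,i)) (f (k,l))"
      using ad that by (auto simp: verts_K_mp)
    then show ?thesis by (simp add: adj_sp')
  qed
  define V where "V j = (\<lambda>i. f (j,i)) ` {..<n j}" for j
  define P1 where "P1 j = fst ` V j" for j
  define P2 where "P2 j = snd ` V j" for j
  have core1: "adj G1 p q" if "j < d" "k < d" "j \<noteq> k" "p \<in> P1 j" "q \<in> P1 k" "p \<noteq> q" for j k p q
  proof -
    note hh = that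
    obtain i l where il: "i < n j" "p = fst (f (j,i))" "l < n k" "q = fst (f (k,l))"
      using hh by (auto simp: P1_def V_def)
    show ?thesis using f_adj[of j k i l] hh il by auto
  qed
  have core2: "adj G2 p q" if "j < d" "k < d" "j \<noteq> k" "p \<in> P2 j" "q \<in> P2 k" "p \<noteq> q" for j k p q
  proof -
    note hh = that
    obtain i l where il: "i < n j" "p = snd (f (j,i))" "l < n k" "q = snd (f (k,l))"
      using hh by (auto simp: P2_def V_def)
    show ?thesis using f_adj[of j k i l] hh il by auto
  qed
  define X where "X = {p. \<exists>j<d. \<exists>k<d. j \<noteq> k \<and> p \<in> P1 j \<and> p \<in> P1 k}"
  define Y where "Y = {p. \<exists>j<d. \<exists>k<d. j \<noteq> k \<and> p \<in> P2 j \<and> p \<in> P2 k}"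
  define A where "A j = P1 j - X" for j
  define B where "B j = P2 j - Y" for j
  have finV: "finite (V j)" for j by (simp add: V_def)
  have fin1: "finite (P1 j)" for j by (simp add: P1_def finV)
  have fin2: "finite (P2 j)" for j by (simp add: P2_def finV)
  have finX: "finite X"
    by (rule finite_subset[of _ "\<Union>j<d. P1 j"]) (auto simp: X_def fin1)
  have finY: "finite Y"
    by (rule finite_subset[of _ "\<Union>j<d. P2 j"]) (auto simp: Y_def fin2)
  have sub1: "P1 j \<subseteq> verts G1" if "j < d" for j
    using f_in that by (force simp: P1_def V_def)
  have sub2: "P2 j \<subseteq> verts G2" if "j < d" for j
    using f_in that by (force simp: P2_def V_def)
  have G1: "subgraph_iso (K_clique d (\<lambda>j. card (A j)) (card X)) G1"
  proof (rule clique_embed)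
    show "\<And>j. j < d \<Longrightarrow> finite (A j)" by (simp add: A_def fin1)
    show "finite X" by (rule finX)
    show "\<And>j. j < d \<Longrightarrow> A j \<subseteq> verts G1" using sub1 by (auto simp: A_def)
    show "X \<subseteq> verts G1" using sub1 by (auto simp: X_def)
    show "\<And>j k. j < d \<Longrightarrow> k < d \<Longrightarrow> j \<noteq> k \<Longrightarrow> A j \<inter> A k = {}"
      by (auto simp: A_def X_def)
    show "\<And>j. j < d \<Longrightarrow> A j \<inter> X = {}" by (auto simp: A_def)
    show "\<And>j k p q. j < d \<Longrightarrow> k < d \<Longrightarrow> j \<noteq> k \<Longrightarrow> p \<in> A j \<Longrightarrow> q \<in> A k \<Longrightarrow> adj G1 p q"
    proof -
      fix j k p q assume h: "j < d" "k < d" "j \<noteq> k" "p \<in> A j" "q \<in> A k"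
      then have "p \<noteq> q" by (auto simp: A_def X_def)
      then show "adj G1 p q" using core1[of j k p q] h by (auto simp: A_def)
    qed
    show "\<And>j p q. j < d \<Longrightarrow> p \<in> A j \<Longrightarrow> q \<in> X \<Longrightarrow> adj G1 p q \<and> adj G1 q p"
    proof -
      fix j p q assume h: "j < d" "p \<in> A j" "q \<in> X"
      then obtain k where k: "k < d" "k \<noteq> j" "q \<in> P1 k" by (auto simp: X_def)
      have "p \<noteq> q" using h by (auto simp: A_def)
      then show "adj G1 p q \<and> adj G1 q p" using core1[of j k p q] core1[of k j q p] h k
        by (auto simp: A_def)
    qed
    show "\<And>p q. p \<in> X \<Longrightarrow> q \<in> X \<Longrightarrow> p \<noteq> q \<Longrightarrow> adj G1 p q"
    proof -
      fix p q assume h: "p \<in> X" "q \<in> X" "p \<noteq> q"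
      then obtain j where j: "j < d" "p \<in> P1 j" by (auto simp: X_def)
      from h obtain k where k: "k < d" "k \<noteq> j" "q \<in> P1 k" by (auto simp: X_def)
      show "adj G1 p q" using core1[of j k p q] h j k by auto
    qed
  qed
  have G2: "subgraph_iso (K_clique d (\<lambda>j. card (B j)) (card Y)) G2"
  proof (rule clique_embed)
    show "\<And>j. j < d \<Longrightarrow> finite (B j)" by (simp add: B_def fin2)
    show "finite Y" by (rule finY)
    show "\<And>j. j < d \<Longrightarrow> B j \<subseteq> verts G2" using sub2 by (auto simp: B_def)
    show "Y \<subseteq> verts G2" using sub2 by (auto simp: Y_def)
    show "\<And>j k. j < d \<Longrightarrow> k < d \<Longrightarrow> j \<noteq> k \<Longrightarrow> B j \<inter> B k = {}"
      by (auto simp: B_def Y_def)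
    show "\<And>j. j < d \<Longrightarrow> B j \<inter> Y = {}" by (auto simp: B_def)
    show "\<And>j k p q. j < d \<Longrightarrow> k < d \<Longrightarrow> j \<noteq> k \<Longrightarrow> p \<in> B j \<Longrightarrow> q \<in> B k \<Longrightarrow> adj G2 p q"
    proof -
      fix j k p q assume h: "j < d" "k < d" "j \<noteq> k" "p \<in> B j" "q \<in> B k"
      then have "p \<noteq> q" by (auto simp: B_def Y_def)
      then show "adj G2 p q" using core2[of j k p q] h by (auto simp: B_def)
    qed
    show "\<And>j p q. j < d \<Longrightarrow> p \<in> B j \<Longrightarrow> q \<in> Y \<Longrightarrow> adj G2 p q \<and> adj G2 q p"
    proof -
      fix j p q assume h: "j < d" "p \<in> B j" "q \<in> Y"
      then obtain k where k: "k < d" "k \<noteq> j" "q \<in> P2 k" by (auto simp: Y_def)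
      have "p \<noteq> q" using h by (auto simp: B_def)
      then show "adj G2 p q \<and> adj G2 q p" using core2[of j k p q] core2[of k j q p] h k
        by (auto simp: B_def)
    qed
    show "\<And>p q. p \<in> Y \<Longrightarrow> q \<in> Y \<Longrightarrow> p \<noteq> q \<Longrightarrow> adj G2 p q"
    proof -
      fix p q assume h: "p \<in> Y" "q \<in> Y" "p \<noteq> q"
      then obtain j where j: "j < d" "p \<in> P2 j" by (auto simp: Y_def)
      from h obtain k where k: "k < d" "k \<noteq> j" "q \<in> P2 k" by (auto simp: Y_def)
      show "adj G2 p q" using core2[of j k p q] h j k by auto
    qed
  qed
  define Z where "Z j = V j \<inter> (X \<times> Y)" for j
  have Vdisj: "V j \<inter> V k = {}" if "j < d" "k < d" "j \<noteq> k" for j k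
    using inj that by (auto simp: V_def inj_on_def verts_K_mp)
  have sumZ: "(\<Sum>j<d. card (Z j)) \<le> card X * card Y"
  proof -
    have "(\<Sum>j<d. card (Z j)) = card (\<Union>j<d. Z j)"
      by (rule card_UN_disjoint[symmetric]) (use Vdisj finV in \<open>auto simp: Z_def\<close>)
    also have "\<dots> \<le> card (X \<times> Y)"
      by (rule card_mono) (auto simp: finX finY Z_def)
    finally show ?thesis by (simp add: card_cartesian_product)
  qed
  have bound: "n j \<le> card (A j) * card (B j) + card (A j) * card Y + card (B j) * card X + card (Z j)"
    if "j < d" for j
  proof -
    have ij: "inj_on (\<lambda>i. f (j,i)) {..<n j}"
      using inj \<open>j < d\<close> unfolding inj_on_def verts_K_mp by blast
    have "n j = card (V j)"
      unfolding V_def by (simp add: card_image[OF ij])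
    also have "V j \<subseteq> (A j \<times> B j \<union> A j \<times> Y) \<union> (X \<times> B j \<union> Z j)"
    proof
      fix e assume e: "e \<in> V j"
      then have "fst e \<in> P1 j" "snd e \<in> P2 j" by (auto simp: P1_def P2_def)
      then show "e \<in> (A j \<times> B j \<union> A j \<times> Y) \<union> (X \<times> B j \<union> Z j)"
        using e by (cases e) (auto simp: A_def B_def Z_def)
    qed
    then have "card (V j) \<le> card ((A j \<times> B j \<union> A j \<times> Y) \<union> (X \<times> B j \<union> Z j))"
      by (rule card_mono[rotated]) (auto simp: A_def B_def Z_def fin1 fin2 finX finY finV)
    also have "\<dots> \<le> card (A j \<times> B j \<union> A j \<times> Y) + card (X \<times> B j \<union> Z j)"
      by (rule card_Un_le)
    also have "\<dots> \<le> (card (A j \<times> B j) + card (A j \<times> Y)) + (card (X \<times> B j) + card (Z j))"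
      by (intro add_mono card_Un_le)
    finally show ?thesis by (simp add: card_cartesian_product mult.commute)
  qed
  show ?thesis
    apply (rule exI[of _ "\<lambda>j. card (A j)"], rule exI[of _ "\<lambda>j. card (B j)"],
        rule exI[of _ "\<lambda>j. card (Z j)"], rule exI[of _ "card X"], rule exI[of _ "card Y"])
    using G1 G2 bound sumZ by auto
qed


lemma adj_K_clique': "adj (K_clique d a x) p q \<longleftrightarrow>
   p \<in> verts (K_clique d a x) \<and> q \<in> verts (K_clique d a x) \<and> p \<noteq> q \<and> (fst p \<noteq> fst q \<or> fst p = d)"
  using adj_K_clique[of d a x "fst p" "snd p" "fst q" "snd q"] by simp

lemma inj_into:
  assumes "finite T" "m \<le> card T"
  shows "\<exists>h. inj_on h {..<m} \<and> h ` {..<m} \<subseteq> T"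
proof -
  obtain h where h: "bij_betw h {0..<card T} T" using ex_bij_betw_nat_finite[OF assms(1)] by blast
  have sub: "{..<m} \<subseteq> {0..<card T}" using assms(2) by auto
  show ?thesis
    using inj_on_subset[OF bij_betw_imp_inj_on[OF h] sub] bij_betw_imp_surj_on[OF h] sub
    by blast
qed

lemma backward:
  fixes G1 :: "'a graph" and G2 :: "'b graph"
  assumes g1: "subgraph_iso (K_clique d a x) G1" and g2: "subgraph_iso (K_clique d b y) G2"
    and bnd: "\<forall>j<d. n j \<le> a j * b j + a j * y + b j * x + z j"
    and sz: "(\<Sum>j<d. z j) \<le> x * y"
  shows "subgraph_iso (K_multipartite d n) (strong_product G1 G2)"
proof -
  let ?K1 = "K_clique d a x" and ?K2 = "K_clique d b y"
  obtain g1 where g1i: "inj_on g1 (verts ?K1)" and g1v: "g1 ` verts ?K1 \<subseteq> verts G1"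
    and g1a0: "\<forall>u\<in>verts ?K1. \<forall>v\<in>verts ?K1. adj ?K1 u v \<longrightarrow> adj G1 (g1 u) (g1 v)"
    using g1 unfolding subgraph_iso_def by (elim exE conjE) (rule that)
  note g1a = g1a0[rule_format]
  obtain g2 where g2i: "inj_on g2 (verts ?K2)" and g2v: "g2 ` verts ?K2 \<subseteq> verts G2"
    and g2a0: "\<forall>u\<in>verts ?K2. \<forall>v\<in>verts ?K2. adj ?K2 u v \<longrightarrow> adj G2 (g2 u) (g2 v)"
    using g2 unfolding subgraph_iso_def by (elim exE conjE) (rule that)
  note g2a = g2a0[rule_format]
  define D where "D = {d} \<times> {..<x}"
  define E where "E = {d} \<times> {..<y}"
  define Aj where "Aj j = {j} \<times> {..<a j}" for j
  define Bj where "Bj j = {j} \<times> {..<b j}" for j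
  define e where "e t = ((d, t div y), (d, t mod y))" for t
  define s where "s j = (\<Sum>k<j. z k)" for j
  define Z where "Z j = e ` {s j..<s j + z j}" for j
  have e_inj: "inj_on e {..<x*y}"
  proof (rule inj_onI)
    fix t t' assume "e t = e t'"
    then have "t div y = t' div y" "t mod y = t' mod y" by (auto simp: e_def)
    then show "t = t'" by (metis div_mult_mod_eq)
  qed
  have e_in: "e t \<in> D \<times> E" if "t < x * y" for t
  proof -
    have "y > 0" using that by (cases y) auto
    then have "t mod y < y" by simp
    moreover have "t div y < x" using that by (simp add: less_mult_imp_div_less)
    ultimately show ?thesis by (simp add: e_def D_def E_def)
  qed
  have s_le: "s j \<le> s k" if "j \<le> k" for j k
    unfolding s_def by (rule sum_mono2) (use that in auto)
  have s_top: "s j + z j \<le> x * y" if "j < d" for j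
  proof -
    have "s j + z j = s (Suc j)" by (simp add: s_def)
    also have "\<dots> \<le> s d" using that by (intro s_le) simp
    finally show ?thesis using sz by (simp add: s_def)
  qed
  have Zsub: "Z j \<subseteq> D \<times> E" if "j < d" for j
    unfolding Z_def by (rule image_subsetI, rule e_in) (use s_top[OF that] in auto)
  have cardZ: "card (Z j) = z j" if "j < d" for j
  proof -
    have "inj_on e {s j..<s j + z j}"
      by (rule inj_on_subset[OF e_inj]) (use s_top[OF that] in auto)
    then show ?thesis by (simp add: Z_def card_image)
  qed
  have Zdisj: "Z j \<inter> Z k = {}" if "j < d" "k < d" "j \<noteq> k" for j k
  proof -
    have gen: "Z j \<inter> Z k = {}" if "j < k" "k < d" for j k
    proof -
      have "s j + z j \<le> s k"
        using s_le[of "Suc j" k] that by (simp add: s_def)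
      then have "{s j..<s j + z j} \<inter> {s k..<s k + z k} = {}" by auto
      moreover have "{s j..<s j + z j} \<union> {s k..<s k + z k} \<subseteq> {..<x*y}"
        using s_top[of j] s_top[of k] that by auto
      ultimately show ?thesis unfolding Z_def
        using inj_on_image_Int[OF e_inj, of "{s j..<s j + z j}" "{s k..<s k + z k}"]
        by (metis image_empty le_sup_iff)
    qed
    show ?thesis
      using that gen[of j k] gen[of k j] by (cases "j < k") auto
  qed
  define T where "T j = (Aj j \<times> Bj j \<union> Aj j \<times> E) \<union> (D \<times> Bj j \<union> Z j)" for j
  have T_char: "t \<in> T j \<Longrightarrow> fst t \<in> Aj j \<union> D \<and> snd t \<in> Bj j \<union> E \<and> (fst t \<in> D \<and> snd t \<in> E \<longrightarrow> t \<in> Z j)"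
    if "j < d" for j t
    using Zsub[OF that] that by (auto simp: T_def Aj_def Bj_def D_def E_def)
  have Tdisj: "T j \<inter> T k = {}" if "j < d" "k < d" "j \<noteq> k" for j k
  proof (rule ccontr)
    assume "T j \<inter> T k \<noteq> {}"
    then obtain t where t: "t \<in> T j" "t \<in> T k" by auto
    have "fst t \<in> D" "snd t \<in> E"
      using T_char[OF that(1) t(1)] T_char[OF that(2) t(2)] that
      by (auto simp: Aj_def Bj_def D_def E_def)
    then show False using T_char[OF that(1) t(1)] T_char[OF that(2) t(2)] Zdisj[OF that] by auto
  qed
  have cardT: "card (T j) = a j * b j + a j * y + b j * x + z j" if "j < d" for j
  proof -
    have fin: "finite (Aj j)" "finite (Bj j)" "finite D" "finite E" "finite (Z j)"
      by (auto simp: Aj_def Bj_def D_def E_def Z_def)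
    have d1: "Aj j \<inter> D = {}" "Bj j \<inter> E = {}" using that by (auto simp: Aj_def Bj_def D_def E_def)
    have "card (T j) = card (Aj j \<times> Bj j \<union> Aj j \<times> E) + card (D \<times> Bj j \<union> Z j)"
      unfolding T_def by (rule card_Un_disjoint) (use fin d1 Zsub[OF that] in auto)
    also have "card (Aj j \<times> Bj j \<union> Aj j \<times> E) = card (Aj j \<times> Bj j) + card (Aj j \<times> E)"
      by (rule card_Un_disjoint) (use fin d1 in auto)
    also have "card (D \<times> Bj j \<union> Z j) = card (D \<times> Bj j) + card (Z j)"
      by (rule card_Un_disjoint) (use fin d1 Zsub[OF that] in auto)
    finally show ?thesis
      by (simp add: card_cartesian_product cardZ[OF that] Aj_def Bj_def D_def E_def card_SigmaI mult.commute)
  qed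
  have finT: "finite (T j)" for j
    by (auto simp: T_def Aj_def Bj_def D_def E_def Z_def)
  define hh where "hh j = (SOME h. inj_on h {..<n j} \<and> h ` {..<n j} \<subseteq> T j)" for j
  have hh: "inj_on (hh j) {..<n j} \<and> hh j ` {..<n j} \<subseteq> T j" if "j < d" for j
    unfolding hh_def
    using someI_ex[OF inj_into[OF finT, of "n j" j]] bnd cardT[OF that] that by auto
  have T_verts: "T j \<subseteq> verts ?K1 \<times> verts ?K2" if "j < d" for j
    using Zsub[OF that] that by (auto simp: T_def Aj_def Bj_def D_def E_def verts_K_clique)
  define F where "F = (\<lambda>(j,i). (g1 (fst (hh j i)), g2 (snd (hh j i))))"
  have hhT: "hh j i \<in> T j" if "j < d" "i < n j" for j i using hh[OF that(1)] that(2) by auto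
  have hhV1: "fst (hh j i) \<in> verts ?K1" and hhV2: "snd (hh j i) \<in> verts ?K2"
    if "j < d" "i < n j" for j i using T_verts[OF that(1)] hhT[OF that] by auto
  have Finj: "inj_on F (verts (K_multipartite d n))"
  proof (rule inj_onI, clarsimp simp: verts_K_mp)
    fix j i k l assume h: "F (j,i) = F (k,l)" "j < d" "i < n j" "k < d" "l < n k"
    have "fst (hh j i) = fst (hh k l)"
      using h inj_onD[OF g1i _ hhV1[of j i] hhV1[of k l]] by (auto simp: F_def)
    moreover have "snd (hh j i) = snd (hh k l)"
      using h inj_onD[OF g2i _ hhV2[of j i] hhV2[of k l]] by (auto simp: F_def)
    ultimately have eq: "hh j i = hh k l" by (rule prod_eqI)
    have "j = k"
      using Tdisj[of j k] hhT[of j i] hhT[of k l] h eq by auto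
    then show "j = k \<and> i = l"
      using eq hh[of j] h by (auto dest: inj_onD)
  qed
  show ?thesis
    unfolding subgraph_iso_def
  proof (intro exI[of _ F] conjI Finj ballI impI)
    show "F ` verts (K_multipartite d n) \<subseteq> verts (strong_product G1 G2)"
      using hhV1 hhV2 g1v g2v by (fastforce simp: verts_K_mp verts_sp F_def)
  next
    fix u v assume u: "u \<in> verts (K_multipartite d n)" and v: "v \<in> verts (K_multipartite d n)"
      and a0: "adj (K_multipartite d n) u v"
    obtain j i k l where uv: "u = (j,i)" "v = (k,l)" by fastforce
    have h: "j < d" "i < n j" "k < d" "l < n k" "j \<noteq> k"
      using u v a0 by (auto simp: uv adj_K_mp verts_K_mp)
    have ne: "F u \<noteq> F v" using Finj u v h uv by (auto dest: inj_onD)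
    let ?p = "hh j i" and ?q = "hh k l"
    have fp: "fst ?p \<in> Aj j \<union> D" "snd ?p \<in> Bj j \<union> E"
      using T_char[OF h(1) hhT[OF h(1,2)]] by auto
    have fq: "fst ?q \<in> Aj k \<union> D" "snd ?q \<in> Bj k \<union> E"
      using T_char[OF h(3) hhT[OF h(3,4)]] by auto
    have A1: "g1 (fst ?p) = g1 (fst ?q) \<or> adj G1 (g1 (fst ?p)) (g1 (fst ?q))"
    proof (cases "fst ?p = fst ?q")
      case False
      have "fst (fst ?p) \<noteq> fst (fst ?q) \<or> fst (fst ?p) = d"
        using fp fq h by (auto simp: Aj_def D_def)
      then have "adj ?K1 (fst ?p) (fst ?q)"
        using False hhV1[OF h(1,2)] hhV1[OF h(3,4)] by (simp add: adj_K_clique')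
      then show ?thesis using g1a hhV1[OF h(1,2)] hhV1[OF h(3,4)] by blast
    qed simp
    have A2: "g2 (snd ?q) = g2 (snd ?p) \<or> adj G2 (g2 (snd ?p)) (g2 (snd ?q))"
    proof (cases "snd ?p = snd ?q")
      case False
      have "fst (snd ?p) \<noteq> fst (snd ?q) \<or> fst (snd ?p) = d"
        using fp fq h by (auto simp: Bj_def E_def)
      then have "adj ?K2 (snd ?p) (snd ?q)"
        using False hhV2[OF h(1,2)] hhV2[OF h(3,4)] by (simp add: adj_K_clique')
      then show ?thesis using g2a hhV2[OF h(1,2)] hhV2[OF h(3,4)] by blast
    qed simp
    show "adj (strong_product G1 G2) (F u) (F v)"
      using ne A1 A2 by (simp add: adj_sp' uv F_def)
  qed
qed


theorem mainTheorem3: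
  fixes G1 :: "'a graph" and G2 :: "'b graph" and d :: nat and n :: "nat \<Rightarrow> nat"
  assumes "graph G1" and "graph G2" and "d \<ge> 2" and "\<forall>j<d. n j \<ge> 1"
  shows "subgraph_iso (K_multipartite d n) (strong_product G1 G2) \<longleftrightarrow>
    (\<exists>(a :: nat \<Rightarrow> nat) (b :: nat \<Rightarrow> nat) (z :: nat \<Rightarrow> nat) (x :: nat) (y :: nat).
       subgraph_iso (K_clique d a x) G1 \<and>
       subgraph_iso (K_clique d b y) G2 \<and>
       (\<forall>j<d. n j \<le> a j * b j + a j * y + b j * x + z j) \<and>
       (\<Sum>j<d. z j) \<le> x * y)"
proof
  assume "subgraph_iso (K_multipartite d n) (strong_product G1 G2)"
  then show "\<exists>(a :: nat \<Rightarrow> nat) (b :: nat \<Rightarrow> nat) (z :: nat \<Rightarrow> nat) (x :: nat) (y :: nat).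
       subgraph_iso (K_clique d a x) G1 \<and>
       subgraph_iso (K_clique d b y) G2 \<and>
       (\<forall>j<d. n j \<le> a j * b j + a j * y + b j * x + z j) \<and>
       (\<Sum>j<d. z j) \<le> x * y" by (rule forward)
next
  assume "\<exists>(a :: nat \<Rightarrow> nat) (b :: nat \<Rightarrow> nat) (z :: nat \<Rightarrow> nat) (x :: nat) (y :: nat).
       subgraph_iso (K_clique d a x) G1 \<and>
       subgraph_iso (K_clique d b y) G2 \<and>
       (\<forall>j<d. n j \<le> a j * b j + a j * y + b j * x + z j) \<and>
       (\<Sum>j<d. z j) \<le> x * y"
  then obtain a b z x y where "subgraph_iso (K_clique d a x) G1" "subgraph_iso (K_clique d b y) G2"
    "\<forall>j<d. n j \<le> a j * b j + a j * y + b j * x + z j" "(\<Sum>j<d. z j) \<le> x * y" by blast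
  then show "subgraph_iso (K_multipartite d n) (strong_product G1 G2)" by (rule backward)
qed

end
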